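(* Let $\sigma$ be a convex polytope in a Euclidean vector space $\mathbb{E}$ and let $D\subseteq\mathbb{E}$ be a finite set which is sufficiently rich for $\sigma$. For a vertex $v$ of $\sigma$ let $E_v=\{w-v \mid w \text{ a vertex of }\sigma,\ w\neq v\}$. Then for every point $x\in Z(D)$ there is a vertex $v$ of $\sigma$ such that $x+Z(E_v)\subseteq Z(D)$. In particular $Z(D)$ contains a parallel translate of $\sigma$ that contains $x$.
   Context: For a finite set $D\subseteq\mathbb{E}$, the zonotope $Z(D)=\sum_{z\in D}[0,z]$ is the Minkowski sum of the segments $[0,z]$. $D$ is sufficiently rich for a polytope $\sigma$ if $w-v\in D$ for any two distinct vertices $v,w$ of $\sigma$. *)

theory Defs
  imports "HOL-Analysis.Analysis"
begin

text \<open>Zonotope: Minkowski sum of the segments from 0 to z, z in D (D finite).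
  An element of the Minkowski sum is a sum of one point t z times z from each segment.\<close>
definition zonotope :: "'a::real_vector set \<Rightarrow> 'a set" where
  "zonotope D = {(\<Sum>z\<in>D. t z *\<^sub>R z) | t. \<forall>z\<in>D. 0 \<le> t z \<and> t z \<le> (1::real)}"

definition vertices :: "'a::real_vector set \<Rightarrow> 'a set" where
  "vertices \<sigma> = {v. v extreme_point_of \<sigma>}"

definition sufficiently_rich :: "'a::real_vector set \<Rightarrow> 'a set \<Rightarrow> bool" where
  "sufficiently_rich D \<sigma> \<longleftrightarrow>
     (\<forall>v\<in>vertices \<sigma>. \<forall>w\<in>vertices \<sigma>. v \<noteq> w \<longrightarrow> w - v \<in> D)"

definition edge_dirs :: "'a::real_vector set \<Rightarrow> 'a \<Rightarrow> 'a set" where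
  "edge_dirs \<sigma> v = {w - v | w. w \<in> vertices \<sigma> \<and> w \<noteq> v}"

end

theory Submission imports Defs begin

lemma cycle_reduce:
  fixes D :: "'a::real_vector set" and step :: "nat \<Rightarrow> 'a"
  assumes fD: "finite D" and valid: "\<forall>z\<in>D. 0 \<le> t z \<and> t z \<le> 1"
    and fK: "finite K" and neK: "K \<noteq> {}" and stepD: "\<forall>k\<in>K. step k \<in> D"
    and pos: "\<forall>k\<in>K. t (step k) > 0"
    and zero: "(\<Sum>k\<in>K. step k) = 0"
  shows "\<exists>t'. (\<forall>z\<in>D. 0 \<le> t' z \<and> t' z \<le> 1) \<and> (\<Sum>z\<in>D. t' z *\<^sub>R z) = (\<Sum>z\<in>D. t z *\<^sub>R z)
      \<and> card {z\<in>D. 0 < t' z} < card {z\<in>D. 0 < t z}"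
proof -
  define m where "m z = real (card {k\<in>K. step k = z})" for z
  define S where "S = step ` K"
  have fS: "finite S" and neS: "S \<noteq> {}" and SD: "S \<subseteq> D"
    using fK neK stepD by (auto simp: S_def)
  have mpos: "m z \<ge> 1" if "z \<in> S" for z
  proof -
    obtain k where "k \<in> K" "step k = z" using \<open>z \<in> S\<close> unfolding S_def by auto
    then have "{k\<in>K. step k = z} \<noteq> {}" by auto
    moreover have "finite {k\<in>K. step k = z}" using fK by auto
    ultimately show ?thesis unfolding m_def
      by (metis One_nat_def Suc_leI card_gt_0_iff of_nat_1 of_nat_le_iff)
  qed
  have m0: "m z = 0" if "z \<notin> S" for z
    using that unfolding m_def S_def by (metis (mono_tags, lifting) card.empty empty_Collect_eq image_eqI of_nat_0)
  have tposS: "t z > 0" if "z \<in> S" for z using that pos S_def by auto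
  define \<epsilon> where "\<epsilon> = Min ((\<lambda>d. t d / m d) ` S)"
  have "\<epsilon> \<in> (\<lambda>d. t d / m d) ` S" unfolding \<epsilon>_def using fS neS by (intro Min_in) auto
  then obtain d0 where d0: "d0 \<in> S" "\<epsilon> = t d0 / m d0" by auto
  have eps_le: "\<epsilon> \<le> t d / m d" if "d \<in> S" for d
    unfolding \<epsilon>_def using fS that by (intro Min_le) auto
  have eps_pos: "\<epsilon> > 0" using d0 tposS[OF d0(1)] mpos[OF d0(1)] by simp
  define t' where "t' z = t z - \<epsilon> * m z" for z
  have mnn: "m z \<ge> 0" for z unfolding m_def by simp
  have t'le: "t' z \<le> t z" for z unfolding t'_def using eps_pos mnn[of z] by simp
  have t'ge: "t' z \<ge> 0" if "z \<in> D" for z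
  proof (cases "z \<in> S")
    case True
    have "\<epsilon> * m z \<le> t z" using eps_le[OF True] mpos[OF True]
      by (simp add: pos_le_divide_eq)
    then show ?thesis unfolding t'_def by simp
  next
    case False then show ?thesis unfolding t'_def using m0 valid that by simp
  qed
  have valid': "\<forall>z\<in>D. 0 \<le> t' z \<and> t' z \<le> 1"
    using t'ge t'le valid by (meson order_trans)
  have msum: "(\<Sum>z\<in>D. m z *\<^sub>R z) = 0"
  proof -
    have "(\<Sum>z\<in>D. m z *\<^sub>R z) = (\<Sum>z\<in>D. \<Sum>k\<in>{k\<in>K. step k = z}. step k)"
      by (rule sum.cong) (auto simp: m_def sum_constant_scaleR)
    also have "\<dots> = (\<Sum>k\<in>K. step k)"
      using sum.group[OF fK fD, of step step] stepD by auto
    finally show ?thesis using zero by simp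
  qed
  have sum': "(\<Sum>z\<in>D. t' z *\<^sub>R z) = (\<Sum>z\<in>D. t z *\<^sub>R z)"
  proof -
    have "(\<Sum>z\<in>D. t' z *\<^sub>R z) = (\<Sum>z\<in>D. t z *\<^sub>R z - \<epsilon> *\<^sub>R (m z *\<^sub>R z))"
      by (rule sum.cong) (auto simp: t'_def algebra_simps)
    also have "\<dots> = (\<Sum>z\<in>D. t z *\<^sub>R z) - \<epsilon> *\<^sub>R (\<Sum>z\<in>D. m z *\<^sub>R z)"
      by (simp add: sum_subtractf scaleR_sum_right)
    finally show ?thesis using msum by simp
  qed
  have "t' d0 = 0" unfolding t'_def using d0 mpos[OF d0(1)] by simp
  have sub: "{z\<in>D. 0 < t' z} \<subset> {z\<in>D. 0 < t z}"
  proof (rule psubsetI)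
    show "{z\<in>D. 0 < t' z} \<subseteq> {z\<in>D. 0 < t z}" using t'le by (auto intro: less_le_trans)
    have "d0 \<in> {z\<in>D. 0 < t z}" using d0(1) SD tposS[OF d0(1)] by auto
    moreover have "d0 \<notin> {z\<in>D. 0 < t' z}" using \<open>t' d0 = 0\<close> by simp
    ultimately show "{z\<in>D. 0 < t' z} \<noteq> {z\<in>D. 0 < t z}" by blast
  qed
  have "card {z\<in>D. 0 < t' z} < card {z\<in>D. 0 < t z}"
    using fD by (intro psubset_card_mono[OF _ sub]) auto
  then show ?thesis using valid' sum' by blast
qed

lemma sink_exists:
  fixes D V :: "'a::real_vector set"
  assumes fD: "finite D" and fV: "finite V" and neV: "V \<noteq> {}"
    and rich: "\<forall>v\<in>V. \<forall>w\<in>V. v \<noteq> w \<longrightarrow> w - v \<in> D"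
    and x: "x \<in> zonotope D"
  shows "\<exists>t v. (\<forall>z\<in>D. 0 \<le> t z \<and> t z \<le> 1) \<and> x = (\<Sum>z\<in>D. t z *\<^sub>R z) \<and> v \<in> V
           \<and> (\<forall>w\<in>V. w \<noteq> v \<longrightarrow> t (w - v) = 0)"
proof -
  define P where "P t \<longleftrightarrow> (\<forall>z\<in>D. 0 \<le> t z \<and> t z \<le> 1) \<and> x = (\<Sum>z\<in>D. t z *\<^sub>R z)"
    for t :: "'a \<Rightarrow> real"
  from x obtain t0 where "\<forall>z\<in>D. 0 \<le> t0 z \<and> t0 z \<le> 1" "x = (\<Sum>z\<in>D. t0 z *\<^sub>R z)"
    unfolding zonotope_def by blast
  then have "P t0" unfolding P_def by blast
  then obtain t where Pt: "P t"
    and tmin: "\<forall>t'. P t' \<longrightarrow> card {z\<in>D. 0 < t z} \<le> card {z\<in>D. 0 < t' z}"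
    using ex_has_least_nat[of P t0 "\<lambda>t. card {z\<in>D. 0 < t z}"] by blast
  show ?thesis
  proof (rule ccontr)
    assume nt: "\<not> ?thesis"
    have ex1: "\<exists>w. w \<in> V \<and> w \<noteq> v \<and> t (w - v) > 0" if "v \<in> V" for v
    proof -
      have "\<not> (\<forall>w\<in>V. w \<noteq> v \<longrightarrow> t (w - v) = 0)"
      proof
        assume "\<forall>w\<in>V. w \<noteq> v \<longrightarrow> t (w - v) = 0"
        with Pt that have "\<exists>t v. P t \<and> v \<in> V \<and> (\<forall>w\<in>V. w \<noteq> v \<longrightarrow> t (w - v) = 0)" by blast
        with nt show False unfolding P_def by blast
      qed
      then obtain w where w: "w \<in> V" "w \<noteq> v" "t (w - v) \<noteq> 0" by blast
      then have "w - v \<in> D" using rich that by auto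
      then have "t (w - v) \<ge> 0" using Pt unfolding P_def by auto
      then have "t (w - v) > 0" using w(3) by linarith
      then show ?thesis using w(1,2) by blast
    qed
    then have that': "\<forall>v\<in>V. \<exists>w. w \<in> V \<and> w \<noteq> v \<and> t (w - v) > 0" by blast
    then obtain f where f: "\<forall>v\<in>V. f v \<in> V \<and> f v \<noteq> v \<and> t (f v - v) > 0" using bchoice[OF that'] by blast
    obtain v0 where v0: "v0 \<in> V" using neV by auto
    define p where "p n = (f ^^ n) v0" for n
    have pSuc: "p (Suc n) = f (p n)" for n unfolding p_def by simp
    have pV: "p n \<in> V" for n
    proof (induction n)
      case 0 then show ?case using v0 by (simp add: p_def)
    next
      case (Suc n) then show ?case using f by (simp add: pSuc)
    qed
    have "\<not> inj_on p {..card V}"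
    proof
      assume "inj_on p {..card V}"
      then have "card (p ` {..card V}) = Suc (card V)" by (simp add: card_image)
      moreover have "card (p ` {..card V}) \<le> card V" using pV fV by (intro card_mono) auto
      ultimately show False by simp
    qed
    then obtain i j where ij: "i \<noteq> j" "p i = p j" unfolding inj_on_def by blast
    have "\<exists>i j. i < j \<and> p i = p j"
    proof (cases "i < j")
      case True then show ?thesis using ij by blast
    next
      case False then have "j < i" using ij(1) by simp
      then show ?thesis using ij(2) by (intro exI[of _ j] exI[of _ i]) simp
    qed
    then obtain i j where ij: "i < j" "p i = p j" by blast
    define step where "step k = p (Suc k) - p k" for k
    have stepD: "\<forall>k\<in>{i..<j}. step k \<in> D"
    proof
      fix k
      have pk: "p k \<in> V" using pV by simp
      then have fk: "f (p k) \<in> V" "p k \<noteq> f (p k)" using f by auto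
      show "step k \<in> D" unfolding step_def pSuc using rich[rule_format, OF pk fk] .
    qed
    have pos: "\<forall>k\<in>{i..<j}. t (step k) > 0"
    proof
      fix k
      show "t (step k) > 0" unfolding step_def pSuc using f pV by simp
    qed
    have zero: "(\<Sum>k\<in>{i..<j}. step k) = 0"
      unfolding step_def using sum_Suc_diff'[of i j p] ij by simp
    have vt: "\<forall>z\<in>D. 0 \<le> t z \<and> t z \<le> 1" using Pt unfolding P_def by auto
    obtain t' where t': "\<forall>z\<in>D. 0 \<le> t' z \<and> t' z \<le> 1"
      "(\<Sum>z\<in>D. t' z *\<^sub>R z) = (\<Sum>z\<in>D. t z *\<^sub>R z)"
      "card {z\<in>D. 0 < t' z} < card {z\<in>D. 0 < t z}"
      using cycle_reduce[OF fD vt _ _ stepD pos zero] ij by auto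
    have "P t'" using t' Pt unfolding P_def by auto
    then have "card {z\<in>D. 0 < t z} \<le> card {z\<in>D. 0 < t' z}" using tmin by blast
    then show False using t'(3) by simp
  qed
qed

lemma absorb:
  fixes D E :: "'a::real_vector set"
  assumes fD: "finite D" and ED: "E \<subseteq> D" and vt: "\<forall>z\<in>D. 0 \<le> t z \<and> t z \<le> 1"
    and t0: "\<forall>e\<in>E. t e = 0"
  shows "(\<lambda>y. (\<Sum>z\<in>D. t z *\<^sub>R z) + y) ` zonotope E \<subseteq> zonotope D"
proof
  fix y assume "y \<in> (\<lambda>y. (\<Sum>z\<in>D. t z *\<^sub>R z) + y) ` zonotope E"
  then obtain s where s: "\<forall>z\<in>E. 0 \<le> s z \<and> s z \<le> 1"
    and y: "y = (\<Sum>z\<in>D. t z *\<^sub>R z) + (\<Sum>z\<in>E. s z *\<^sub>R z)"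
    unfolding zonotope_def by blast
  define t' where "t' z = (if z \<in> E then s z else t z)" for z
  have v': "\<forall>z\<in>D. 0 \<le> t' z \<and> t' z \<le> 1" using vt s by (auto simp: t'_def)
  have "(\<Sum>z\<in>D. t' z *\<^sub>R z) = (\<Sum>z\<in>D-E. t' z *\<^sub>R z) + (\<Sum>z\<in>E. t' z *\<^sub>R z)"
    using sum.subset_diff[OF ED fD] by simp
  also have "\<dots> = (\<Sum>z\<in>D-E. t z *\<^sub>R z) + (\<Sum>z\<in>E. s z *\<^sub>R z)"
    by (simp add: t'_def)
  also have "(\<Sum>z\<in>D-E. t z *\<^sub>R z) = (\<Sum>z\<in>D. t z *\<^sub>R z)"
  proof -
    have "(\<Sum>z\<in>D. t z *\<^sub>R z) = (\<Sum>z\<in>D-E. t z *\<^sub>R z) + (\<Sum>z\<in>E. t z *\<^sub>R z)"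
      using sum.subset_diff[OF ED fD] by simp
    moreover have "(\<Sum>z\<in>E. t z *\<^sub>R z) = 0" using t0 by simp
    ultimately show ?thesis by simp
  qed
  finally have "y = (\<Sum>z\<in>D. t' z *\<^sub>R z)" using y by simp
  then show "y \<in> zonotope D" unfolding zonotope_def using v' by blast
qed

lemma hull_in_zonotope:
  fixes V :: "'a::real_vector set"
  assumes fV: "finite V" and v: "v \<in> V" and y: "y \<in> convex hull V"
  shows "y - v \<in> zonotope {w - v | w. w \<in> V \<and> w \<noteq> v}"
proof -
  obtain u where u0: "\<forall>w\<in>V. 0 \<le> u w" and u1: "sum u V = 1" and uy: "(\<Sum>w\<in>V. u w *\<^sub>R w) = y"
    using y unfolding convex_hull_finite[OF fV] by blast
  define E where "E = {w - v | w. w \<in> V \<and> w \<noteq> v}"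
  have E: "E = (\<lambda>w. w - v) ` (V - {v})" unfolding E_def by auto
  have inj: "inj_on (\<lambda>w. w - v) (V - {v})" by (auto intro: inj_onI)
  define s where "s e = u (e + v)" for e
  have "(\<Sum>e\<in>E. s e *\<^sub>R e) = (\<Sum>w\<in>V-{v}. u w *\<^sub>R (w - v))"
    unfolding E by (subst sum.reindex[OF inj]) (simp add: s_def)
  also have "\<dots> = (\<Sum>w\<in>V. u w *\<^sub>R (w - v))"
    using sum.remove[OF fV v, of "\<lambda>w. u w *\<^sub>R (w - v)"] by simp
  also have "\<dots> = (\<Sum>w\<in>V. u w *\<^sub>R w) - (\<Sum>w\<in>V. u w) *\<^sub>R v"
    by (simp add: scaleR_diff_right sum_subtractf scaleR_sum_left)
  also have "\<dots> = y - v" using uy u1 by simp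
  finally have eq: "(\<Sum>e\<in>E. s e *\<^sub>R e) = y - v" .
  have "\<forall>e\<in>E. 0 \<le> s e \<and> s e \<le> 1"
  proof
    fix e assume "e \<in> E"
    then obtain w where w: "w \<in> V" "e = w - v" unfolding E_def by auto
    have "u w \<le> sum u V" using member_le_sum[of w V u] u0 w fV by simp
    then show "0 \<le> s e \<and> s e \<le> 1" using u0 w u1 by (simp add: s_def)
  qed
  then show ?thesis using eq unfolding zonotope_def E_def[symmetric] by (auto intro!: exI[of _ s])
qed

theorem mainTheorem15:
  fixes \<sigma> D :: "'a::euclidean_space set"
  assumes "polytope \<sigma>" and "\<sigma> \<noteq> {}"
    and "finite D" and "sufficiently_rich D \<sigma>"
  shows "\<forall>x\<in>zonotope D.
           (\<exists>v\<in>vertices \<sigma>. (\<lambda>y. x + y) ` zonotope (edge_dirs \<sigma> v) \<subseteq> zonotope D)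
         \<and> (\<exists>t. x \<in> (\<lambda>y. t + y) ` \<sigma> \<and> (\<lambda>y. t + y) ` \<sigma> \<subseteq> zonotope D)"
proof
  fix x assume x: "x \<in> zonotope D"
  define V where "V = vertices \<sigma>"
  obtain P where fP: "finite P" and sP: "\<sigma> = convex hull P" using assms(1) unfolding polytope_def by blast
  have VP: "V \<subseteq> P" unfolding V_def vertices_def sP by (rule extreme_points_of_convex_hull)
  have fV: "finite V" using finite_subset[OF VP fP] .
  have sV: "\<sigma> = convex hull V"
    unfolding V_def vertices_def
    using Krein_Milman_Minkowski[OF polytope_imp_compact[OF assms(1)] polytope_imp_convex[OF assms(1)]] .
  have neV: "V \<noteq> {}" using assms(2) sV by auto
  have rich: "\<forall>v\<in>V. \<forall>w\<in>V. v \<noteq> w \<longrightarrow> w - v \<in> D"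
    using assms(4) unfolding sufficiently_rich_def V_def by blast
  obtain t v where vt: "\<forall>z\<in>D. 0 \<le> t z \<and> t z \<le> 1" and xt: "x = (\<Sum>z\<in>D. t z *\<^sub>R z)"
    and vV: "v \<in> V" and sink: "\<forall>w\<in>V. w \<noteq> v \<longrightarrow> t (w - v) = 0"
    using sink_exists[OF assms(3) fV neV rich x] by blast
  have Ed: "edge_dirs \<sigma> v = {w - v | w. w \<in> V \<and> w \<noteq> v}" unfolding edge_dirs_def V_def ..
  have ED: "edge_dirs \<sigma> v \<subseteq> D"
  proof
    fix e assume "e \<in> edge_dirs \<sigma> v"
    then obtain w where w: "w \<in> V" "w \<noteq> v" "e = w - v" unfolding Ed by blast
    then show "e \<in> D" using rich[rule_format, OF vV w(1)] by simp
  qed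
  have t0: "\<forall>e\<in>edge_dirs \<sigma> v. t e = 0"
  proof
    fix e assume "e \<in> edge_dirs \<sigma> v"
    then obtain w where w: "w \<in> V" "w \<noteq> v" "e = w - v" unfolding Ed by blast
    then show "t e = 0" using sink by simp
  qed
  have sub: "(\<lambda>y. x + y) ` zonotope (edge_dirs \<sigma> v) \<subseteq> zonotope D"
    using absorb[OF assms(3) ED vt t0] xt by simp
  have vs: "v \<in> \<sigma>" using vV unfolding V_def vertices_def extreme_point_of_def by simp
  have "(\<lambda>y. (x - v) + y) ` \<sigma> \<subseteq> zonotope D"
  proof
    fix z assume "z \<in> (\<lambda>y. (x - v) + y) ` \<sigma>"
    then obtain y where y: "y \<in> \<sigma>" "z = (x - v) + y" by blast
    have "y - v \<in> zonotope (edge_dirs \<sigma> v)"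
    proof -
      have "y \<in> convex hull V" using y(1) sV by simp
      from hull_in_zonotope[OF fV vV this] show ?thesis
        unfolding edge_dirs_def V_def .
    qed
    then have "x + (y - v) \<in> zonotope D" using sub by blast
    moreover have "z = x + (y - v)" using y(2) by (simp add: algebra_simps)
    ultimately show "z \<in> zonotope D" by simp
  qed
  moreover have "x \<in> (\<lambda>y. (x - v) + y) ` \<sigma>" using vs by (intro image_eqI[of _ _ v]) auto
  ultimately have ex2: "\<exists>t. x \<in> (\<lambda>y. t + y) ` \<sigma> \<and> (\<lambda>y. t + y) ` \<sigma> \<subseteq> zonotope D"
    by (intro exI[of _ "x - v"] conjI)
  have ex1: "\<exists>v\<in>vertices \<sigma>. (\<lambda>y. x + y) ` zonotope (edge_dirs \<sigma> v) \<subseteq> zonotope D"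
    using sub vV unfolding V_def by (intro bexI[of _ v])
  show "(\<exists>v\<in>vertices \<sigma>. (\<lambda>y. x + y) ` zonotope (edge_dirs \<sigma> v) \<subseteq> zonotope D)
         \<and> (\<exists>t. x \<in> (\<lambda>y. t + y) ` \<sigma> \<and> (\<lambda>y. t + y) ` \<sigma> \<subseteq> zonotope D)"
    using ex1 ex2 by (rule conjI)
qed

end
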